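(* Let $S$ have a maximum of type (a), fix $\xi\in\mathbb{R}^m$, and let $\tilde S(x,N)=S(x,N)+\sqrt{h(N)}(x^*-x)^T\xi$, which for large $N$ has a unique maximum at a point $\tilde x^*(N)$. Assume $\epsilon(N)\ll 1/\sqrt{h(N)}$. Then, as $N\to\infty$: (i) $\tilde x^*(N)-x^*(N)=D^2s(x^* )^{-1}\dfrac{\xi}{\sqrt{h(N)}}+O\big(\tfrac1{h(N)}\big)$; (ii) $\tilde S(\tilde x^*(N),N)=S(x^*(N),N)-\tfrac12\xi^TD^2s(x^* )^{-1}\xi+O\big(\tfrac1{\sqrt{h(N)}}\big)$ when $\epsilon(N)\ll 1/h(N)$, and $\tilde S(\tilde x^*(N),N)=S(x^*(N),N)-\tfrac12\xi^TD^2s(x^* )^{-1}\xi+O\big(\sqrt{h(N)}\epsilon(N)\big)$ when $\epsilon(N)\gg1/h(N)$; (iii) $\dfrac{\sqrt{\det D^2S(x^*(N),N)}}{\sqrt{\det D^2\tilde S(\tilde x^*(N),N)}}=1+O\big(\tfrac1{\sqrt{h(N)}}\big)$.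
   Context: Let $m\ge 1$ and let $\Omega\subset\mathbb{R}^m$ be convex. For each $N$, $S(\cdot,N)$ is a real function on $\Omega$. Standing assumptions: there is $N_0$ such that for all $N>N_0$, $S(\cdot,N)$ has a unique maximum at $x^*(N)$, and $x^*(N)\to x^*$. There are $C^2$, three times differentiable functions $s:\Omega\to\mathbb{R}$, $\sigma:\Omega\to\mathbb{R}^m$ (relevant derivatives bounded), a sequence $\epsilon(N)\to0$ and $h(N)\to\infty$ with $h(N)=N$ or $h(N)/N\to0$, such that for large $N$: $DS(x,N)=h(N)[Ds(x)+\sigma(x)\epsilon(N)]$, $D^2S(x,N)$ is negative definite, and $D^2s(x)$ is invertible ($D$ gradient, $D^2$ Hessian). Type (a) maximum: $x^*(N)$ lies in the interior of $\Omega$ at distance bounded below by a positive constant from $\partial\Omega$ for all large $N$, so $DS(x^*(N),N)=0$ and $Ds(x^* )=0$. *)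

theory Defs
  imports "HOL-Analysis.Analysis" "HOL-Library.Landau_Symbols"
begin

definition tildeS ::
  "(real^'n \<Rightarrow> nat \<Rightarrow> real) \<Rightarrow> (nat \<Rightarrow> real) \<Rightarrow> real^'n \<Rightarrow> real^'n \<Rightarrow> real^'n \<Rightarrow> nat \<Rightarrow> real"
  where "tildeS S h xstar xi x N = S x N + sqrt (h N) * ((xstar - x) \<bullet> xi)"

definition unique_max_at :: "'a set \<Rightarrow> ('a \<Rightarrow> real) \<Rightarrow> 'a \<Rightarrow> bool"
  where "unique_max_at Om f p \<longleftrightarrow> p \<in> Om \<and> (\<forall>x\<in>Om. x \<noteq> p \<longrightarrow> f x < f p)"

end

theory Submission
  imports Defs
begin


lemma matrix_inv_props:
  fixes A :: "real^'n^'n"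
  assumes "invertible A"
  shows "A ** matrix_inv A = mat 1" "matrix_inv A ** A = mat 1"
proof -
  have "\<exists>A'::real^'n^'n. A ** A' = mat 1 \<and> A' ** A = mat 1" using assms unfolding invertible_def .
  then have "A ** matrix_inv A = mat 1 \<and> matrix_inv A ** A = mat 1"
    unfolding matrix_inv_def by (rule someI_ex)
  then show "A ** matrix_inv A = mat 1" "matrix_inv A ** A = mat 1" by auto
qed

lemma cm_le:
  fixes A :: "real^'n^'m"
  shows "\<bar>A$i$j\<bar> \<le> norm A"
  using component_le_norm_cart[of "A$i" j] Finite_Cartesian_Product.norm_nth_le[of A i] by linarith

lemma matvec_bound:
  fixes M :: "real^'n^'m" and v :: "real^'n"
  shows "norm (M *v v) \<le> real CARD('m) * real CARD('n) * norm M * norm v"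
proof -
  have "onorm ((*v) M) \<le> real CARD('m) * real CARD('n) * norm M"
    by (rule onorm_le_matrix_component) (rule cm_le)
  moreover have "norm (M *v v) \<le> onorm ((*v) M) * norm v"
    using onorm[OF matrix_vector_mul_bounded_linear, of M v] .
  ultimately show ?thesis by (meson mult_right_mono norm_ge_zero order_trans)
qed

lemma det_scaleR:
  fixes M :: "real^'n^'n"
  shows "det (c *\<^sub>R M) = c ^ CARD('n) * det M"
proof -
  have "\<And>p. (\<Prod>i\<in>UNIV. (c *\<^sub>R M)$i$p i) = c ^ CARD('n) * (\<Prod>i\<in>UNIV. M$i$p i)"
    by (simp add: prod.distrib)
  then show ?thesis unfolding det_def by (simp add: sum_distrib_left algebra_simps)
qed



lemma det_lipschitz:
  fixes M M' :: "real^'n^'n"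
  assumes K: "K \<ge> 1" "norm M \<le> K" "norm M' \<le> K"
  shows "\<bar>det M - det M'\<bar> \<le> real (card {p. p permutes (UNIV::'n set)}) * (K ^ CARD('n) * real CARD('n)) * norm (M - M')"
proof -
  let ?P = "{p. p permutes (UNIV::'n set)}"
  have fin: "finite ?P" by (simp add: finite_permutations)
  have per: "\<bar>(\<Prod>i\<in>UNIV. M$i$p i) - (\<Prod>i\<in>UNIV. M'$i$p i)\<bar> \<le> K^CARD('n) * real CARD('n) * norm (M - M')" for p
  proof -
    have Kp: "K > 0" using K by simp
    have e1: "(\<Prod>i\<in>UNIV. M$i$p i) = K^CARD('n) * (\<Prod>i\<in>UNIV. M$i$p i / K)"
      using Kp by (simp add: prod_dividef)
    have e2: "(\<Prod>i\<in>UNIV. M'$i$p i) = K^CARD('n) * (\<Prod>i\<in>UNIV. M'$i$p i / K)"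
      using Kp by (simp add: prod_dividef)
    have cm: "\<bar>A$i$j\<bar> \<le> norm A" for A :: "real^'n^'n" and i j
      by (rule cm_le)
    have "norm ((\<Prod>i\<in>UNIV. M$i$p i / K) - (\<Prod>i\<in>UNIV. M'$i$p i / K)) \<le> (\<Sum>i\<in>UNIV. norm (M$i$p i / K - M'$i$p i / K))"
    proof (rule norm_prod_diff)
      fix i show "norm (M$i$p i / K) \<le> 1" using cm[of M i "p i"] K Kp by (simp add: abs_div)
    next
      fix i show "norm (M'$i$p i / K) \<le> 1" using cm[of M' i "p i"] K Kp by (simp add: abs_div)
    qed
    also have "\<dots> \<le> (\<Sum>i\<in>(UNIV::'n set). norm (M - M'))"
    proof (rule sum_mono)
      fix i
      have "norm (M$i$p i / K - M'$i$p i / K) = \<bar>(M - M')$i$p i\<bar> / K" using Kp by (simp add: diff_divide_distrib[symmetric] abs_div)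
      also have "\<dots> \<le> \<bar>(M - M')$i$p i\<bar>" using K by (simp add: divide_le_eq mult_le_cancel_left1)
      also have "\<dots> \<le> norm (M - M')" by (rule cm)
      finally show "norm (M$i$p i / K - M'$i$p i / K) \<le> norm (M - M')" .
    qed
    finally have "\<bar>(\<Prod>i\<in>UNIV. M$i$p i / K) - (\<Prod>i\<in>UNIV. M'$i$p i / K)\<bar> \<le> real CARD('n) * norm (M - M')" by simp
    then have "K^CARD('n) * \<bar>(\<Prod>i\<in>UNIV. M$i$p i / K) - (\<Prod>i\<in>UNIV. M'$i$p i / K)\<bar> \<le> K^CARD('n) * (real CARD('n) * norm (M - M'))"
      using Kp by (simp add: mult_left_mono)
    then show ?thesis unfolding e1 e2 using Kp
      by (simp add: abs_mult right_diff_distrib[symmetric] mult_ac)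
  qed
  have "det M - det M' = (\<Sum>p\<in>?P. of_int (sign p) * ((\<Prod>i\<in>UNIV. M$i$p i) - (\<Prod>i\<in>UNIV. M'$i$p i)))"
    unfolding det_def by (simp add: sum_subtractf right_diff_distrib)
  also have "\<bar>\<dots>\<bar> \<le> (\<Sum>p\<in>?P. \<bar>of_int (sign p) * ((\<Prod>i\<in>UNIV. M$i$p i) - (\<Prod>i\<in>UNIV. M'$i$p i))\<bar>)"
    by (rule sum_abs)
  also have "\<dots> \<le> (\<Sum>p\<in>?P. K^CARD('n) * real CARD('n) * norm (M - M'))"
    by (rule sum_mono) (simp add: abs_mult sign_def per)
  finally show ?thesis by simp
qed




lemma segment_in:
  assumes "convex Om" "x \<in> Om" "y \<in> Om" "t \<in> {0..1::real}"
  shows "x + t *\<^sub>R (y - x) \<in> Om"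
proof -
  have "x + t *\<^sub>R (y - x) = (1 - t) *\<^sub>R x + t *\<^sub>R y" by (simp add: algebra_simps)
  then show ?thesis using assms by (simp add: convex_alt)
qed

lemma strict_concave_grad:
  fixes f :: "real^'n \<Rightarrow> real" and g :: "real^'n \<Rightarrow> real^'n" and H :: "real^'n \<Rightarrow> real^'n^'n"
  assumes conv: "convex Om"
    and df: "\<And>x. x \<in> Om \<Longrightarrow> (f has_derivative (\<lambda>v. g x \<bullet> v)) (at x within Om)"
    and dg: "\<And>x. x \<in> Om \<Longrightarrow> (g has_derivative (\<lambda>v. H x *v v)) (at x within Om)"
    and neg: "\<And>x v. x \<in> Om \<Longrightarrow> v \<noteq> 0 \<Longrightarrow> v \<bullet> (H x *v v) < 0"
    and x: "x \<in> Om" and y: "y \<in> Om" and xy: "x \<noteq> y"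
  shows "f y < f x + g x \<bullet> (y - x)"
proof -
  define d where "d = y - x"
  define \<gamma> where "\<gamma> = (\<lambda>t::real. x + t *\<^sub>R d)"
  have d0: "d \<noteq> 0" using xy by (simp add: d_def)
  have \<gamma>in: "\<gamma> t \<in> Om" if "t \<in> {0..1}" for t
    using segment_in[OF conv x y that] by (simp add: \<gamma>_def d_def)
  have img: "\<gamma> ` {0..1} \<subseteq> Om" using \<gamma>in by auto
  have d\<gamma>: "(\<gamma> has_derivative (\<lambda>u. u *\<^sub>R d)) (at t within T)" for t T
    unfolding \<gamma>_def by (auto intro!: derivative_eq_intros)
  have df': "((\<lambda>t. f (\<gamma> t) - t * (g x \<bullet> d)) has_derivative (\<lambda>u. u * (g (\<gamma> t) \<bullet> d - g x \<bullet> d))) (at t within {0..1})"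
    if "t \<in> {0..1}" for t
  proof -
    have "((f \<circ> \<gamma>) has_derivative ((\<lambda>v. g (\<gamma> t) \<bullet> v) \<circ> (\<lambda>u. u *\<^sub>R d))) (at t within {0..1})"
      by (rule diff_chain_within[OF d\<gamma> has_derivative_subset[OF df[OF \<gamma>in[OF that]] img]])
    then have "((\<lambda>t. f (\<gamma> t)) has_derivative (\<lambda>u. u * (g (\<gamma> t) \<bullet> d))) (at t within {0..1})"
      by (simp add: o_def)
    then show ?thesis
      by (auto intro!: derivative_eq_intros simp: algebra_simps)
  qed
  have dg': "((\<lambda>t. g (\<gamma> t) \<bullet> d) has_derivative (\<lambda>u. u * (d \<bullet> (H (\<gamma> t) *v d)))) (at t within {0..1})"
    if "t \<in> {0..1}" for t
  proof -
    have "((g \<circ> \<gamma>) has_derivative ((\<lambda>v. H (\<gamma> t) *v v) \<circ> (\<lambda>u. u *\<^sub>R d))) (at t within {0..1})"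
      by (rule diff_chain_within[OF d\<gamma> has_derivative_subset[OF dg[OF \<gamma>in[OF that]] img]])
    then have "((\<lambda>t. g (\<gamma> t)) has_derivative (\<lambda>u. u *\<^sub>R (H (\<gamma> t) *v d))) (at t within {0..1})"
      by (simp add: o_def matrix_vector_mult_scaleR)
    then have "((\<lambda>t. g (\<gamma> t) \<bullet> d) has_derivative (\<lambda>u. (u *\<^sub>R (H (\<gamma> t) *v d)) \<bullet> d)) (at t within {0..1})"
      by (rule has_derivative_inner_left)
    then show ?thesis by (simp add: inner_commute)
  qed
  obtain \<tau> where \<tau>: "\<tau> \<in> {0<..<1}" and e1: "(f (\<gamma> 1) - 1 * (g x \<bullet> d)) - (f (\<gamma> 0) - 0 * (g x \<bullet> d))
       = (1 - 0) * (g (\<gamma> \<tau>) \<bullet> d - g x \<bullet> d)"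
    using mvt_simple[of 0 1 "\<lambda>t. f (\<gamma> t) - t * (g x \<bullet> d)" "\<lambda>t u. u * (g (\<gamma> t) \<bullet> d - g x \<bullet> d)"] df'
    by auto
  have dg'': "((\<lambda>t. g (\<gamma> t) \<bullet> d) has_derivative (\<lambda>u. u * (d \<bullet> (H (\<gamma> t) *v d)))) (at t within {0..\<tau>})"
    if "0 \<le> t" "t \<le> \<tau>" for t
    using dg'[of t] that \<tau> by (auto intro: has_derivative_subset)
  obtain \<eta> where \<eta>: "\<eta> \<in> {0<..<\<tau>}" and e2: "g (\<gamma> \<tau>) \<bullet> d - g (\<gamma> 0) \<bullet> d = (\<tau> - 0) * (d \<bullet> (H (\<gamma> \<eta>) *v d))"
    using mvt_simple[of 0 \<tau> "\<lambda>t. g (\<gamma> t) \<bullet> d" "\<lambda>t u. u * (d \<bullet> (H (\<gamma> t) *v d))"] dg'' \<tau>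
    by auto
  have "d \<bullet> (H (\<gamma> \<eta>) *v d) < 0" using neg[OF \<gamma>in d0] \<eta> \<tau> by auto
  then have "g (\<gamma> \<tau>) \<bullet> d - g x \<bullet> d < 0" using e2 \<tau> by (simp add: \<gamma>_def mult_pos_neg)
  then show ?thesis using e1 by (simp add: \<gamma>_def d_def)
qed

lemma taylor1:
  fixes Ds sigma :: "real^'n \<Rightarrow> real^'n" and D2s Jsigma :: "real^'n \<Rightarrow> real^'n^'n"
  assumes conv: "convex U"
    and dDs: "\<And>x. x \<in> U \<Longrightarrow> (Ds has_derivative (\<lambda>v. D2s x *v v)) (at x within U)"
    and dsig: "\<And>x. x \<in> U \<Longrightarrow> (sigma has_derivative (\<lambda>v. Jsigma x *v v)) (at x within U)"
    and lip: "\<And>x y. x \<in> U \<Longrightarrow> y \<in> U \<Longrightarrow> norm (D2s x - D2s y) \<le> B * norm (x - y)"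
    and bJ: "\<And>x. x \<in> U \<Longrightarrow> norm (Jsigma x) \<le> B"
    and B: "B \<ge> 0" and c: "c \<in> U" and x: "x \<in> U" and y: "y \<in> U"
  shows "norm ((Ds y + e *\<^sub>R sigma y) - (Ds x + e *\<^sub>R sigma x) - D2s c *v (y - x))
     \<le> real CARD('n) * real CARD('n) * B * (norm (x - c) + norm (y - c) + \<bar>e\<bar>) * norm (y - x)"
proof -
  let ?K = "real CARD('n) * real CARD('n)"
  let ?R = "norm (x - c) + norm (y - c)"
  define T where "T = closed_segment x y"
  have TU: "T \<subseteq> U" using conv x y by (simp add: T_def closed_segment_subset)
  have Tc: "norm (z - c) \<le> ?R" if "z \<in> T" for z
  proof -
    have "T \<subseteq> cball c (max (norm (x - c)) (norm (y - c)))"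
      unfolding T_def by (rule closed_segment_subset) (auto simp: dist_norm norm_minus_commute)
    then have "norm (z - c) \<le> max (norm (x - c)) (norm (y - c))" using that by (auto simp: dist_norm norm_minus_commute)
    then show ?thesis by (smt (verit) norm_ge_zero)
  qed
  define \<phi> where "\<phi> = (\<lambda>z. Ds z + e *\<^sub>R sigma z - D2s c *v z)"
  have d\<phi>: "(\<phi> has_derivative (\<lambda>v. (D2s z - D2s c + e *\<^sub>R Jsigma z) *v v)) (at z within T)" if "z \<in> T" for z
  proof -
    have zU: "z \<in> U" using that TU by auto
    have "(\<phi> has_derivative (\<lambda>v. D2s z *v v + e *\<^sub>R (Jsigma z *v v) - D2s c *v v)) (at z within T)"
      unfolding \<phi>_def
      by (intro derivative_intros has_derivative_subset[OF dDs[OF zU] TU] has_derivative_subset[OF dsig[OF zU] TU] bounded_linear_imp_has_derivative[OF matrix_vector_mul_bounded_linear])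
    then show ?thesis
      by (simp add: matrix_vector_mult_diff_rdistrib matrix_vector_mult_add_rdistrib matrix_vector_mult_scaleR scaleR_matrix_vector_assoc algebra_simps)
  qed
  have bnd: "onorm (\<lambda>v. (D2s z - D2s c + e *\<^sub>R Jsigma z) *v v) \<le> ?K * B * (?R + \<bar>e\<bar>)" if "z \<in> T" for z
  proof (rule onorm_le)
    fix v
    have zU: "z \<in> U" using that TU by auto
    have "norm (D2s z - D2s c + e *\<^sub>R Jsigma z) \<le> norm (D2s z - D2s c) + \<bar>e\<bar> * norm (Jsigma z)"
      by (metis norm_scaleR norm_triangle_ineq)
    also have "\<dots> \<le> B * ?R + \<bar>e\<bar> * B"
      using lip[OF zU c] Tc[OF that] bJ[OF zU] B
      by (intro add_mono mult_left_mono) (auto intro: order_trans mult_left_mono)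
    finally have nm: "norm (D2s z - D2s c + e *\<^sub>R Jsigma z) \<le> B * (?R + \<bar>e\<bar>)" by (simp add: algebra_simps)
    have "norm ((D2s z - D2s c + e *\<^sub>R Jsigma z) *v v) \<le> ?K * norm (D2s z - D2s c + e *\<^sub>R Jsigma z) * norm v"
      by (rule matvec_bound)
    also have "\<dots> \<le> ?K * (B * (?R + \<bar>e\<bar>)) * norm v"
      using nm by (intro mult_right_mono mult_left_mono) auto
    finally show "norm ((D2s z - D2s c + e *\<^sub>R Jsigma z) *v v) \<le> ?K * B * (?R + \<bar>e\<bar>) * norm v"
      by (simp add: mult_ac)
  qed
  have "norm (\<phi> y - \<phi> x) \<le> ?K * B * (?R + \<bar>e\<bar>) * norm (y - x)"
    by (rule differentiable_bound[OF _ d\<phi> bnd]) (auto simp: T_def)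
  moreover have "\<phi> y - \<phi> x = (Ds y + e *\<^sub>R sigma y) - (Ds x + e *\<^sub>R sigma x) - D2s c *v (y - x)"
    by (simp add: \<phi>_def matrix_vector_mult_diff_distrib algebra_simps)
  ultimately show ?thesis by (simp add: mult_ac)
qed




lemma sqrt_ratio_bound:
  fixes t1 t2 D eps :: real
  assumes D: "D \<noteq> 0" and t1: "\<bar>t1 - D\<bar> \<le> eps" and t2: "\<bar>t2 - D\<bar> \<le> eps" and e: "eps \<le> \<bar>D\<bar> / 2"
  shows "\<bar>sqrt t1 / sqrt t2 - 1\<bar> \<le> 4 * eps / \<bar>D\<bar>"
proof -
  have t2a: "\<bar>t2\<bar> \<ge> \<bar>D\<bar> / 2" using t2 e by linarith
  have pos: "t1 / t2 > 0"
  proof (cases "D > 0")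
    case True then have "t1 > 0" "t2 > 0" using t1 t2 e by auto
    then show ?thesis by simp
  next
    case False then have "D < 0" using D by simp
    then have "t1 < 0" "t2 < 0" using t1 t2 e by auto
    then show ?thesis by (simp add: divide_neg_neg)
  qed
  let ?u = "t1 / t2"
  have eq: "sqrt t1 / sqrt t2 = sqrt ?u" by (simp add: real_sqrt_divide)
  have su: "\<bar>sqrt ?u - 1\<bar> \<le> \<bar>?u - 1\<bar>"
  proof -
    have ss0: "sqrt ?u * sqrt ?u = \<bar>?u\<bar>" by (rule real_sqrt_mult_self)
    have ss: "sqrt ?u * sqrt ?u = ?u" using ss0 abs_of_pos[OF pos] by simp
    have "?u - 1 = (sqrt ?u - 1) * (sqrt ?u + 1)" using ss by (simp add: algebra_simps)
    moreover have "\<bar>sqrt ?u + 1\<bar> = sqrt ?u + 1" using real_sqrt_ge_zero[OF less_imp_le[OF pos]] by (intro abs_of_nonneg) linarith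
    ultimately have "\<bar>?u - 1\<bar> = \<bar>sqrt ?u - 1\<bar> * (sqrt ?u + 1)" by (simp only: abs_mult)
    moreover have "sqrt ?u + 1 \<ge> 1" using real_sqrt_ge_zero[OF less_imp_le[OF pos]] by linarith
    moreover have "\<bar>sqrt ?u - 1\<bar> * 1 \<le> \<bar>sqrt ?u - 1\<bar> * (sqrt ?u + 1)"
      using \<open>sqrt ?u + 1 \<ge> 1\<close> by (intro mult_left_mono) auto
    ultimately show ?thesis by simp
  qed
  have "?u - 1 = (t1 - t2) / t2" using t2a D by (simp add: field_simps)
  then have "\<bar>?u - 1\<bar> = \<bar>t1 - t2\<bar> / \<bar>t2\<bar>" by simp
  also have "\<dots> \<le> (2 * eps) / (\<bar>D\<bar> / 2)"
  proof (rule frac_le)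
    show "0 \<le> 2 * eps" using t1 by linarith
    show "\<bar>t1 - t2\<bar> \<le> 2 * eps" using t1 t2 by linarith
    show "0 < \<bar>D\<bar> / 2" using D by simp
    show "\<bar>D\<bar> / 2 \<le> \<bar>t2\<bar>" by (rule t2a)
  qed
  also have "\<dots> = 4 * eps / \<bar>D\<bar>" by simp
  finally show ?thesis using eq su by simp
qed

lemma value_identity:
  fixes A :: "real^'n^'n" and w xi d d0 rho :: "real^'n"
  assumes "A *v w = xi" "d = q *\<^sub>R w + rho" "H * q\<^sup>2 = 1"
  shows "1/2 * H * (d \<bullet> (A *v d)) - (H * q) * (d0 \<bullet> xi) - (H * q) * (d \<bullet> xi) + 1/2 * (xi \<bullet> w)
       = - (H * q) * (d0 \<bullet> xi) + 1/2 * (H * q) * (w \<bullet> (A *v rho)) - 1/2 * (H * q) * (rho \<bullet> xi) + 1/2 * H * (rho \<bullet> (A *v rho))"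
proof -
  have e: "d \<bullet> (A *v d) = q\<^sup>2 * (w \<bullet> xi) + q * (w \<bullet> (A *v rho)) + q * (rho \<bullet> xi) + rho \<bullet> (A *v rho)"
    using assms(1,2) by (simp add: matrix_vector_right_distrib matrix_vector_mult_scaleR inner_add_left inner_add_right power2_eq_square algebra_simps)
  have e2: "d \<bullet> xi = q * (w \<bullet> xi) + rho \<bullet> xi" using assms(2) by (simp add: inner_add_left)
  have e3: "H * q * q = 1" using assms(3) by (simp add: power2_eq_square mult_ac)
  have e4: "xi \<bullet> w = w \<bullet> xi" by (simp add: inner_commute)
  have e5: "1/2 * H * (q\<^sup>2 * (w \<bullet> xi)) = 1/2 * (w \<bullet> xi)" using assms(3) by simp
  have e6: "(H * q) * (q * (w \<bullet> xi)) = w \<bullet> xi" using e3 by (simp add: mult.assoc[symmetric])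
  show ?thesis unfolding e e2 e4 distrib_left right_diff_distrib e5 e6 by (simp add: algebra_simps)
qed



lemma sqrt_inv_eq: fixes H :: real assumes "H > 0" shows "sqrt H * (1 / H) = 1 / sqrt H"
proof -
  have "sqrt H * sqrt H = H" using assms by simp
  moreover have "sqrt H > 0" using assms by simp
  ultimately show ?thesis by (metis divide_divide_eq_right nonzero_mult_div_cancel_left order_less_irrefl times_divide_eq_right div_by_1)
qed
lemma abs5: fixes x1 x2 x3 x4 x5 :: real
  shows "\<bar>x1\<bar> \<le> b1 \<Longrightarrow> \<bar>x2\<bar> \<le> b2 \<Longrightarrow> \<bar>x3\<bar> \<le> b3 \<Longrightarrow> \<bar>x4\<bar> \<le> b4 \<Longrightarrow> \<bar>x5\<bar> \<le> b5 \<Longrightarrow>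
   \<bar>x1 + (- x2 + x3 - x4 + x5)\<bar> \<le> b1 + b2 + b3 + b4 + b5"
  by linarith



theorem mainTheorem7:
  fixes Om :: "(real^'n) set"
    and S :: "real^'n \<Rightarrow> nat \<Rightarrow> real"
    and gradS :: "real^'n \<Rightarrow> nat \<Rightarrow> real^'n"
    and hessS :: "real^'n \<Rightarrow> nat \<Rightarrow> real^'n^'n"
    and s :: "real^'n \<Rightarrow> real"
    and Ds :: "real^'n \<Rightarrow> real^'n"
    and D2s :: "real^'n \<Rightarrow> real^'n^'n"
    and D3s :: "real^'n \<Rightarrow> real^'n \<Rightarrow> real^'n^'n"
    and sigma :: "real^'n \<Rightarrow> real^'n"
    and Jsigma :: "real^'n \<Rightarrow> real^'n^'n"
    and D2sigma :: "real^'n \<Rightarrow> real^'n \<Rightarrow> real^'n^'n"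
    and eps h :: "nat \<Rightarrow> real"
    and xs :: "nat \<Rightarrow> real^'n"
    and xstar xi :: "real^'n"
    and N0 :: nat
  assumes conv: "convex Om"
    and uniq: "\<forall>N>N0. unique_max_at Om (\<lambda>x. S x N) (xs N)"
    and xs_lim: "xs \<longlonglongrightarrow> xstar"
    and eps_lim: "eps \<longlonglongrightarrow> 0"
    and h_lim: "filterlim h at_top sequentially"
    and h_N: "(\<forall>N. h N = real N) \<or> ((\<lambda>N. h N / real N) \<longlonglongrightarrow> 0)"
    and s_C2: "\<forall>x\<in>Om. (s has_derivative (\<lambda>v. Ds x \<bullet> v)) (at x within Om)
                   \<and> (Ds has_derivative (\<lambda>v. D2s x *v v)) (at x within Om)
                   \<and> (D2s has_derivative D3s x) (at x within Om)"
    and s_cont: "continuous_on Om D2s"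
    and sigma_C2: "\<forall>x\<in>Om. (sigma has_derivative (\<lambda>v. Jsigma x *v v)) (at x within Om)
                   \<and> (Jsigma has_derivative D2sigma x) (at x within Om)
                   \<and> (\<forall>v. (\<lambda>y. D2sigma y v) differentiable (at x within Om))"
    and sigma_cont: "continuous_on Om Jsigma"
    and bdd: "\<exists>B. \<forall>x\<in>Om. norm (sigma x) \<le> B \<and> norm (Jsigma x) \<le> B \<and> onorm (D2sigma x) \<le> B
                        \<and> norm (D2s x) \<le> B \<and> onorm (D3s x) \<le> B"
    and D2s_inv: "\<forall>x\<in>Om. invertible (D2s x)"
    and S_deriv: "eventually (\<lambda>N. \<forall>x\<in>Om.
                     ((\<lambda>y. S y N) has_derivative (\<lambda>v. gradS x N \<bullet> v)) (at x within Om)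
                   \<and> ((\<lambda>y. gradS y N) has_derivative (\<lambda>v. hessS x N *v v)) (at x within Om)
                   \<and> gradS x N = h N *\<^sub>R (Ds x + eps N *\<^sub>R sigma x)
                   \<and> (\<forall>v. v \<noteq> 0 \<longrightarrow> v \<bullet> (hessS x N *v v) < 0)) sequentially"
    and typeA: "\<exists>\<delta>>0. eventually (\<lambda>N. ball (xs N) \<delta> \<subseteq> Om) sequentially"
    and eps_small: "eps \<in> o(\<lambda>N. 1 / sqrt (h N))"
  shows "\<exists>xt :: nat \<Rightarrow> real^'n.
     eventually (\<lambda>N. unique_max_at Om (\<lambda>x. tildeS S h xstar xi x N) (xt N)) sequentially
   \<and> (\<lambda>N. norm (xt N - xs N - (1 / sqrt (h N)) *\<^sub>R (matrix_inv (D2s xstar) *v xi)))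
        \<in> O(\<lambda>N. 1 / h N)
   \<and> (eps \<in> o(\<lambda>N. 1 / h N) \<longrightarrow>
        (\<lambda>N. tildeS S h xstar xi (xt N) N
              - (S (xs N) N - 1/2 * (xi \<bullet> (matrix_inv (D2s xstar) *v xi))))
        \<in> O(\<lambda>N. 1 / sqrt (h N)))
   \<and> ((\<lambda>N. 1 / h N) \<in> o(eps) \<longrightarrow>
        (\<lambda>N. tildeS S h xstar xi (xt N) N
              - (S (xs N) N - 1/2 * (xi \<bullet> (matrix_inv (D2s xstar) *v xi))))
        \<in> O(\<lambda>N. sqrt (h N) * eps N))
   \<and> (\<lambda>N. sqrt (det (hessS (xs N) N)) / sqrt (det (hessS (xt N) N)) - 1)
        \<in> O(\<lambda>N. 1 / sqrt (h N))"
  proof -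
  obtain B where bB: "\<forall>x\<in>Om. norm (sigma x) \<le> B \<and> norm (Jsigma x) \<le> B \<and> onorm (D2sigma x) \<le> B
                        \<and> norm (D2s x) \<le> B \<and> onorm (D3s x) \<le> B" using bdd by blast
  obtain \<delta> where \<delta>: "\<delta> > 0" and evball: "eventually (\<lambda>N. ball (xs N) \<delta> \<subseteq> Om) sequentially"
    using typeA by blast
  have xsin: "xs N \<in> Om" if "N > N0" for N using uniq that unfolding unique_max_at_def by blast
  have B0: "B \<ge> 0" using bB xsin[of "Suc N0"] by (meson norm_ge_zero order_trans lessI)
  have U0: "ball xstar (\<delta>/2) \<subseteq> Om"
  proof -
    have "eventually (\<lambda>N. dist (xs N) xstar < \<delta>/2) sequentially" by (rule tendstoD[OF xs_lim]) (simp add: \<delta>)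
    with evball have "eventually (\<lambda>N. ball (xs N) \<delta> \<subseteq> Om \<and> dist (xs N) xstar < \<delta>/2) sequentially"
      by (rule eventually_conj)
    then obtain N where N: "ball (xs N) \<delta> \<subseteq> Om" "dist (xs N) xstar < \<delta>/2"
      unfolding eventually_sequentially by blast
    show ?thesis
    proof
      fix y assume "y \<in> ball xstar (\<delta>/2)"
      then have "dist xstar y < \<delta>/2" by simp
      then have "dist (xs N) y < \<delta>" using N(2) dist_triangle[of "xs N" y xstar] by linarith
      then show "y \<in> Om" using N(1) by auto
    qed
  qed
  have xstarOm: "xstar \<in> Om" using U0 \<delta> by auto
  define A where "A = D2s xstar"
  define Ai where "Ai = matrix_inv A"
  have Ainv: "invertible A" using D2s_inv xstarOm by (simp add: A_def)
  have AAi: "A ** Ai = mat 1" "Ai ** A = mat 1" using matrix_inv_props[OF Ainv] by (simp_all add: Ai_def)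
  have AiA_v: "Ai *v (A *v v) = v" for v using AAi by (simp add: matrix_vector_mul_assoc)
  have AAi_v: "A *v (Ai *v v) = v" for v using AAi by (simp add: matrix_vector_mul_assoc)
  define K0 where "K0 = real CARD('n) * real CARD('n)"
  have K0: "K0 \<ge> 1" unfolding K0_def
    by (metis One_nat_def Suc_leI mult_le_cancel_left1 of_nat_1 of_nat_le_iff zero_less_card_finite zero_less_one_class.zero_le_one order_trans linorder_not_le mult.right_neutral)
  define a where "a = K0 * norm Ai + 1"
  have a1: "a \<ge> 1" using K0 by (simp add: a_def)
  have Aib: "norm (Ai *v v) \<le> a * norm v" for v
  proof -
    have "norm (Ai *v v) \<le> K0 * norm Ai * norm v" using matvec_bound[of Ai v] by (simp add: K0_def)
    also have "\<dots> \<le> a * norm v" by (simp add: a_def mult_right_mono)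
    finally show ?thesis .
  qed
  have normA: "norm A \<le> B" using bB xstarOm by (simp add: A_def)
  have Ab: "norm (A *v v) \<le> K0 * B * norm v" for v
  proof -
    have "norm (A *v v) \<le> K0 * norm A * norm v" using matvec_bound[of A v] by (simp add: K0_def)
    also have "\<dots> \<le> K0 * B * norm v" using normA K0 by (intro mult_right_mono mult_left_mono) auto
    finally show ?thesis .
  qed
  define \<zeta> where "\<zeta> = min (\<delta>/2) (1 / (2 * a * K0 * (B + 1)))"
  have \<zeta>0: "\<zeta> > 0" using \<delta> a1 K0 B0 by (simp add: \<zeta>_def)
  have \<zeta>\<delta>: "\<zeta> \<le> \<delta>/2" by (simp add: \<zeta>_def)
  have aKB\<zeta>: "a * K0 * B * \<zeta> \<le> 1/2"
  proof -
    have "a * K0 * B * \<zeta> \<le> a * K0 * (B + 1) * \<zeta>" using a1 K0 \<zeta>0 by (simp add: mult_right_mono)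
    also have "\<dots> \<le> a * K0 * (B + 1) * (1 / (2 * a * K0 * (B + 1)))"
      using a1 K0 B0 by (intro mult_left_mono) (auto simp: \<zeta>_def)
    also have "\<dots> = 1/2" using a1 K0 B0 by simp
    finally show ?thesis .
  qed
  define U where "U = ball xstar \<zeta>"
  have UOm: "U \<subseteq> Om" using U0 \<zeta>\<delta> unfolding U_def by (meson order_trans subset_ball)
  have convU: "convex U" and openU: "open U" and xstarU: "xstar \<in> U" using \<zeta>0 by (auto simp: U_def)
  have dDsU: "(Ds has_derivative (\<lambda>v. D2s x *v v)) (at x within U)" if "x \<in> U" for x
    using s_C2 that UOm by (meson has_derivative_subset subsetD)
  have dsigU: "(sigma has_derivative (\<lambda>v. Jsigma x *v v)) (at x within U)" if "x \<in> U" for x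
    using sigma_C2 that UOm by (meson has_derivative_subset subsetD)
  have dD2sU: "(D2s has_derivative D3s x) (at x within U)" if "x \<in> U" for x
    using s_C2 that UOm by (meson has_derivative_subset subsetD)
  have lip: "norm (D2s x - D2s y) \<le> B * norm (x - y)" if "x \<in> U" "y \<in> U" for x y
    by (rule differentiable_bound[OF convU dD2sU _ that]) (use bB UOm in auto)
  have bJ: "norm (Jsigma x) \<le> B" if "x \<in> U" for x using bB UOm that by auto
  have bsig: "norm (sigma x) \<le> B" if "x \<in> U" for x using bB UOm that by auto
  have T1: "norm ((Ds y + e *\<^sub>R sigma y) - (Ds x + e *\<^sub>R sigma x) - A *v (y - x))
     \<le> K0 * B * (norm (x - xstar) + norm (y - xstar) + \<bar>e\<bar>) * norm (y - x)" if "x \<in> U" "y \<in> U" for x y e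
    unfolding A_def K0_def
    by (rule taylor1[OF convU dDsU dsigU lip bJ B0 xstarU that])
  have Dslip: "norm (Ds x - Ds y) \<le> (K0 * B) * norm (x - y)" if "x \<in> U" "y \<in> U" for x y
  proof (rule differentiable_bound[OF convU dDsU _ that])
    fix z assume z: "z \<in> U"
    show "onorm (\<lambda>v. D2s z *v v) \<le> K0 * B"
    proof (rule onorm_le)
      fix v
      have "norm (D2s z *v v) \<le> K0 * norm (D2s z) * norm v" using matvec_bound[of "D2s z" v] by (simp add: K0_def)
      also have "\<dots> \<le> K0 * B * norm v" using bB UOm z K0 by (intro mult_right_mono mult_left_mono) auto
      finally show "norm (D2s z *v v) \<le> K0 * B * norm v" .
    qed
  qed
  define SD where "SD = (\<lambda>N. \<forall>x\<in>Om.
                     ((\<lambda>y. S y N) has_derivative (\<lambda>v. gradS x N \<bullet> v)) (at x within Om)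
                   \<and> ((\<lambda>y. gradS y N) has_derivative (\<lambda>v. hessS x N *v v)) (at x within Om)
                   \<and> gradS x N = h N *\<^sub>R (Ds x + eps N *\<^sub>R sigma x)
                   \<and> (\<forall>v. v \<noteq> 0 \<longrightarrow> v \<bullet> (hessS x N *v v) < 0))"
  have evSD: "eventually SD sequentially" using S_deriv unfolding SD_def .
  have grad0: "gradS (xs N) N = 0" if "N > N0" "SD N" "xs N \<in> U" for N
  proof -
    have int: "xs N \<in> interior Om" using that(3) openU UOm interior_maximal by blast
    have "((\<lambda>y. S y N) has_derivative (\<lambda>v. gradS (xs N) N \<bullet> v)) (at (xs N))"
      using that(2) xsin[OF that(1)] at_within_interior[OF int] unfolding SD_def by metis
    moreover have "\<forall>y\<in>U. S y N \<le> S (xs N) N"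
      using uniq that(1) UOm unfolding unique_max_at_def by (metis less_imp_le order_refl subsetD)
    ultimately have "(\<lambda>v. gradS (xs N) N \<bullet> v) = (\<lambda>v. 0)"
      using differential_zero_maxmin[OF that(3) openU] by blast
    then have "gradS (xs N) N \<bullet> gradS (xs N) N = 0" by metis
    then show ?thesis by simp
  qed
  have evh1: "eventually (\<lambda>N. h N \<ge> 1) sequentially" using h_lim by (simp add: filterlim_at_top)
  have Ds0: "Ds xstar = 0"
  proof -
    have ev: "eventually (\<lambda>N. norm (Ds xstar) \<le> \<bar>eps N\<bar> * B + K0 * B * norm (xs N - xstar)) sequentially"
    proof -
      have "eventually (\<lambda>N. dist (xs N) xstar < \<zeta>) sequentially" by (rule tendstoD[OF xs_lim]) (simp add: \<zeta>0)
      moreover have "eventually (\<lambda>N. N > N0) sequentially" by (simp add: eventually_gt_at_top)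
      ultimately show ?thesis using evSD evh1
      proof eventually_elim
        case (elim N)
        then have xsU: "xs N \<in> U" by (simp add: U_def dist_commute)
        have "h N *\<^sub>R (Ds (xs N) + eps N *\<^sub>R sigma (xs N)) = 0"
          using grad0[OF elim(2) elim(3) xsU] elim(3) xsin[OF elim(2)] unfolding SD_def by metis
        then have "Ds (xs N) = - (eps N *\<^sub>R sigma (xs N))" using elim(4) by (simp add: eq_neg_iff_add_eq_0)
        then have n1: "norm (Ds (xs N)) \<le> \<bar>eps N\<bar> * B" using bsig[OF xsU] by (simp add: mult_left_mono)
        have "norm (Ds xstar) \<le> norm (Ds (xs N)) + norm (Ds xstar - Ds (xs N))" by (metis norm_triangle_sub)
        also have "\<dots> \<le> \<bar>eps N\<bar> * B + K0 * B * norm (xs N - xstar)"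
          using n1 Dslip[OF xstarU xsU] by (simp add: norm_minus_commute)
        finally show ?case .
      qed
    qed
    have lim: "(\<lambda>N. \<bar>eps N\<bar> * B + K0 * B * norm (xs N - xstar)) \<longlonglongrightarrow> 0"
    proof -
      have "(\<lambda>N. \<bar>eps N\<bar>) \<longlonglongrightarrow> 0" using eps_lim by (simp add: tendsto_rabs_zero)
      moreover have "(\<lambda>N. norm (xs N - xstar)) \<longlonglongrightarrow> 0" using xs_lim by (simp add: LIM_zero tendsto_norm_zero)
      ultimately show ?thesis by (auto intro!: tendsto_add_zero tendsto_mult_left_zero tendsto_mult_right_zero)
    qed
    have "norm (Ds xstar) \<le> 0"
      by (rule tendsto_le[OF trivial_limit_sequentially lim tendsto_const ev])
    then show ?thesis by simp
  qed
  define q where "q = (\<lambda>N. 1 / sqrt (h N))"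
  have q_lim: "q \<longlonglongrightarrow> 0"
  proof -
    have "filterlim (\<lambda>N. sqrt (h N)) at_top sequentially" by (rule filterlim_compose[OF sqrt_at_top h_lim])
    then have "filterlim (\<lambda>N. sqrt (h N)) at_infinity sequentially" by (rule filterlim_at_top_imp_at_infinity)
    then show ?thesis unfolding q_def by (rule tendsto_divide_0[OF tendsto_const])
  qed
  define nx where "nx = norm xi"
  define w where "w = Ai *v xi"
  have Aw: "A *v w = xi" by (simp add: w_def AAi_v)
  have nw: "norm w \<le> a * nx" using Aib by (simp add: w_def nx_def)
  have nx0: "nx \<ge> 0" by (simp add: nx_def)
  define c1 where "c1 = 4*a*B + 2*a*nx + 1"
  have c1: "c1 \<ge> 1" using a1 B0 nx0 by (simp add: c1_def)
  define C1 where "C1 = 2 * a^2 * K0 * B * c1 * nx"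
  have C1: "C1 \<ge> 0" using a1 B0 nx0 K0 c1 by (simp add: C1_def)
  define c2 where "c2 = 4 * K0 * B * c1 * a^2 * nx^2"
  have c2: "c2 \<ge> 0" using a1 B0 nx0 K0 c1 by (simp add: c2_def)
  define C2 where "C2 = c2 + 2*a*B*nx + 1/2 * a * nx * K0 * B * C1 + 1/2 * C1 * nx + 1/2 * C1^2 * K0 * B"
  have C2: "C2 \<ge> 0" using a1 B0 nx0 K0 c1 C1 c2 by (simp add: C2_def)
  define Dd where "Dd = det A"
  have Dd0: "Dd \<noteq> 0" using Ainv by (simp add: Dd_def invertible_det_nz)
  define Kd where "Kd = real (card {p. p permutes (UNIV::'n set)}) * ((norm A + 1) ^ CARD('n) * real CARD('n))"
  have Kd: "Kd \<ge> 0" by (simp add: Kd_def)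
  define C3 where "C3 = 4 * Kd * B * c1 / \<bar>Dd\<bar>"
  have C3: "C3 \<ge> 0" using Kd B0 c1 by (simp add: C3_def)
  define qmax where "qmax = min (\<zeta> / (8 * (2*a*nx + 1))) (min (1 / (B*c1 + 1)) (\<bar>Dd\<bar> / (2 * (Kd*B*c1 + 1))))"
  have p1: "a * nx \<ge> 0" "B * c1 \<ge> 0" "Kd * B * c1 \<ge> 0" using a1 nx0 B0 c1 Kd by auto
  have qmax: "qmax > 0" using \<zeta>0 p1 Dd0 unfolding qmax_def
    by (auto intro!: divide_pos_pos add_nonneg_pos)
  define G where "G = (\<lambda>N. N > N0 \<and> SD N \<and> norm (xs N - xstar) < \<zeta>/4 \<and> h N \<ge> 1 \<and> \<bar>eps N\<bar> \<le> \<zeta>/4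
                      \<and> \<bar>eps N\<bar> \<le> q N \<and> q N \<le> qmax)"
  have evG: "eventually G sequentially"
  proof -
    have e1: "eventually (\<lambda>N. N > N0) sequentially" by (simp add: eventually_gt_at_top)
    have e3: "eventually (\<lambda>N. dist (xs N) xstar < \<zeta>/4) sequentially" by (rule tendstoD[OF xs_lim]) (simp add: \<zeta>0)
    have e5: "eventually (\<lambda>N. dist (eps N) 0 < \<zeta>/4) sequentially" by (rule tendstoD[OF eps_lim]) (simp add: \<zeta>0)
    have e6: "eventually (\<lambda>N. norm (eps N) \<le> 1 * norm (1 / sqrt (h N))) sequentially"
      by (rule landau_o.smallD[OF eps_small]) simp
    have e7: "eventually (\<lambda>N. dist (q N) 0 < qmax) sequentially" by (rule tendstoD[OF q_lim qmax])
    show ?thesis using e1 evSD e3 evh1 e5 e6 e7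
    proof eventually_elim
      case (elim N)
      have "norm (1 / sqrt (h N)) = q N" using elim(4) by (simp add: q_def)
      moreover have "\<bar>q N\<bar> = q N" using elim(4) by (simp add: q_def)
      ultimately show ?case using elim unfolding G_def by (auto simp: dist_norm)
    qed
  qed
  define P where "P = (\<lambda>N x. unique_max_at Om (\<lambda>x. tildeS S h xstar xi x N) x
     \<and> norm (x - xs N - (1 / sqrt (h N)) *\<^sub>R (Ai *v xi)) \<le> C1 * (1 / h N)
     \<and> \<bar>tildeS S h xstar xi x N - (S (xs N) N - 1/2 * (xi \<bullet> (Ai *v xi)))\<bar> \<le> C2 * (q N + sqrt (h N) * \<bar>eps N\<bar>)
     \<and> \<bar>sqrt (det (hessS (xs N) N)) / sqrt (det (hessS x N)) - 1\<bar> \<le> C3 * q N)"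
  have per: "\<exists>x. P N x" if "G N" for N
  proof -
    define H where "H = h N"
    define e where "e = eps N"
    define qq where "qq = q N"
    define F where "F = (\<lambda>x. Ds x + e *\<^sub>R sigma x)"
    from that have N0N: "N > N0" and SDN: "SD N" and xsn: "norm (xs N - xstar) < \<zeta>/4" and H1: "H \<ge> 1"
      and e4: "\<bar>e\<bar> \<le> \<zeta>/4" and eqq: "\<bar>e\<bar> \<le> qq" and qqm: "qq \<le> qmax"
      unfolding G_def H_def e_def qq_def by auto
    have Hpos: "H > 0" using H1 by simp
    have qqdef: "qq = 1 / sqrt H" by (simp add: qq_def q_def H_def)
    have qq0: "qq > 0" using Hpos by (simp add: qqdef)
    have sH: "sqrt H * sqrt H = H" using Hpos by simp
    have sHpos: "sqrt H > 0" using Hpos by simp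
    have sq: "sqrt H * qq = 1" using sHpos by (simp add: qqdef)
    have Hq2: "H * qq\<^sup>2 = 1" using sH sHpos by (simp add: qqdef power2_eq_square)
    have Hq: "H * qq = sqrt H" using Hpos by (simp add: qqdef real_div_sqrt)
    have qq1: "qq \<le> 1" using H1 by (simp add: qqdef)
    have qq2: "qq\<^sup>2 = 1 / H" using Hq2 Hpos by (simp add: field_simps)
    have gradF: "gradS x N = H *\<^sub>R F x" if "x \<in> Om" for x
      using SDN that unfolding SD_def F_def H_def e_def by blast
    have xsU: "xs N \<in> U" using xsn \<zeta>0 by (simp add: U_def dist_norm norm_minus_commute)
    have Fxs: "F (xs N) = 0" using grad0[OF N0N SDN xsU] gradF[OF xsin[OF N0N]] Hpos by simp
    define d0 where "d0 = xs N - xstar"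
    have d0\<zeta>: "norm d0 < \<zeta>/4" using xsn by (simp add: d0_def)
    have d0b: "norm d0 \<le> 2*a*B*\<bar>e\<bar>"
    proof -
      have t: "norm (F (xs N) - F xstar - A *v (xs N - xstar)) \<le> K0*B*(norm (xstar - xstar) + norm (xs N - xstar) + \<bar>e\<bar>) * norm (xs N - xstar)"
        using T1[OF xstarU xsU, of e] by (simp add: F_def)
      have s\<zeta>: "norm d0 + \<bar>e\<bar> \<le> \<zeta>" using d0\<zeta> e4 by linarith
      have "K0*B*(norm (xstar - xstar) + norm (xs N - xstar) + \<bar>e\<bar>) * norm (xs N - xstar) \<le> K0*B*\<zeta>*norm d0"
        using s\<zeta> K0 B0 by (simp add: d0_def) (intro mult_right_mono mult_left_mono, auto)
      moreover have eqn: "F (xs N) - F xstar - A *v (xs N - xstar) = - (A *v d0 + e *\<^sub>R sigma xstar)"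
        using Fxs Ds0 by (simp add: F_def d0_def)
      moreover have "norm (- (A *v d0 + e *\<^sub>R sigma xstar)) = norm (A *v d0 + e *\<^sub>R sigma xstar)"
        by (rule norm_minus_cancel)
      ultimately have t2: "norm (A *v d0 + e *\<^sub>R sigma xstar) \<le> K0*B*\<zeta>*norm d0" using t[unfolded eqn] by linarith
      have "norm (A *v d0) \<le> norm (A *v d0 + e *\<^sub>R sigma xstar) + norm (e *\<^sub>R sigma xstar)"
        using norm_triangle_ineq4[of "A *v d0 + e *\<^sub>R sigma xstar" "e *\<^sub>R sigma xstar"] by simp
      also have "norm (e *\<^sub>R sigma xstar) \<le> \<bar>e\<bar> * B" using bsig[OF xstarU] by (simp add: mult_left_mono)
      finally have nA: "norm (A *v d0) \<le> K0*B*\<zeta>*norm d0 + \<bar>e\<bar> * B" using t2 by linarith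
      have "norm d0 = norm (Ai *v (A *v d0))" by (simp add: AiA_v)
      also have "\<dots> \<le> a * norm (A *v d0)" by (rule Aib)
      also have "\<dots> \<le> a * (K0*B*\<zeta>*norm d0 + \<bar>e\<bar> * B)" using nA a1 by (intro mult_left_mono) auto
      also have "\<dots> = (a*K0*B*\<zeta>) * norm d0 + a*B*\<bar>e\<bar>" by (simp add: algebra_simps)
      also have "\<dots> \<le> 1/2 * norm d0 + a*B*\<bar>e\<bar>" using aKB\<zeta> by (intro add_right_mono mult_right_mono) auto
      finally show ?thesis by linarith
    qed
    define r where "r = 2*a*nx*qq"
    have r0: "r \<ge> 0" using a1 nx0 qq0 by (simp add: r_def)
    have r\<zeta>: "r \<le> \<zeta>/8"
    proof -
      have qb: "qq \<le> \<zeta> / (8 * (2*a*nx + 1))" using qqm by (simp add: qmax_def)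
      have an: "2*a*nx \<ge> 0" using a1 nx0 by simp
      have "r \<le> 2*a*nx * (\<zeta> / (8 * (2*a*nx + 1)))" unfolding r_def using qb an by (intro mult_left_mono) auto
      also have "\<dots> = (\<zeta>/8) * (2*a*nx / (2*a*nx + 1))" using an by (simp add: field_simps)
      also have "\<dots> \<le> (\<zeta>/8) * 1" using an \<zeta>0 by (intro mult_left_mono) auto
      finally show ?thesis by simp
    qed
    define X where "X = cball (xs N) r"
    have Xb: "norm (x - xstar) \<le> r + norm d0" if "x \<in> X" for x
    proof -
      have "norm (x - xstar) \<le> norm (x - xs N) + norm d0" unfolding d0_def using norm_triangle_ineq[of "x - xs N" "xs N - xstar"] by simp
      moreover have "norm (x - xs N) \<le> r" using that by (simp add: X_def dist_norm norm_minus_commute)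
      ultimately show ?thesis by linarith
    qed
    have XU: "X \<subseteq> U"
    proof
      fix x assume "x \<in> X"
      then have "norm (x - xstar) < \<zeta>" using Xb d0\<zeta> r\<zeta> \<zeta>0 by fastforce
      then show "x \<in> U" by (simp add: U_def dist_norm norm_minus_commute)
    qed
    have xsX: "xs N \<in> X" using r0 by (simp add: X_def)
    define Tm where "Tm = (\<lambda>x. x - Ai *v (F x - qq *\<^sub>R xi))"
    have Tdiff: "Tm x - Tm y = - (Ai *v (F x - F y - A *v (x - y)))" for x y
    proof -
      have "Tm x - Tm y = (x - y) - Ai *v (F x - F y)"
        by (simp add: Tm_def matrix_vector_mult_diff_distrib algebra_simps)
      also have "\<dots> = Ai *v (A *v (x - y)) - Ai *v (F x - F y)" by (simp add: AiA_v)
      also have "\<dots> = - (Ai *v (F x - F y - A *v (x - y)))" by (simp add: matrix_vector_mult_diff_distrib)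
      finally show ?thesis .
    qed
    have contr: "dist (Tm x) (Tm y) \<le> 1/2 * dist x y" if xX: "x \<in> X" and yX: "y \<in> X" for x y
    proof -
      have xU: "x \<in> U" and yU: "y \<in> U" using xX yX XU by auto
      have sm: "norm (y - xstar) + norm (x - xstar) + \<bar>e\<bar> \<le> \<zeta>" using Xb[OF xX] Xb[OF yX] d0\<zeta> r\<zeta> e4 by linarith
      have "dist (Tm x) (Tm y) = norm (Ai *v (F x - F y - A *v (x - y)))" by (simp add: dist_norm Tdiff)
      also have "\<dots> \<le> a * norm (F x - F y - A *v (x - y))" by (rule Aib)
      also have "\<dots> \<le> a * (K0 * B * (norm (y - xstar) + norm (x - xstar) + \<bar>e\<bar>) * norm (x - y))"
        using T1[OF yU xU, of e] a1 by (intro mult_left_mono) (auto simp: F_def)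
      also have "\<dots> \<le> a * (K0 * B * \<zeta> * norm (x - y))"
        using sm a1 K0 B0 by (intro mult_left_mono mult_right_mono) auto
      also have "\<dots> = (a * K0 * B * \<zeta>) * dist x y" by (simp add: dist_norm)
      also have "\<dots> \<le> 1/2 * dist x y" using aKB\<zeta> by (intro mult_right_mono) auto
      finally show ?thesis .
    qed
    have selfm: "Tm ` X \<subseteq> X"
    proof
      fix z assume "z \<in> Tm ` X"
      then obtain x where xX: "x \<in> X" and z: "z = Tm x" by blast
      have "Tm (xs N) - xs N = Ai *v (qq *\<^sub>R xi)" by (simp add: Tm_def Fxs matrix_vector_mult_diff_distrib)
      then have n1: "norm (Tm (xs N) - xs N) \<le> a * (qq * nx)" using Aib[of "qq *\<^sub>R xi"] qq0 by (simp add: nx_def)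
      have "dist (xs N) z \<le> dist (Tm x) (Tm (xs N)) + norm (Tm (xs N) - xs N)"
        unfolding z dist_norm by (metis dist_norm dist_triangle3 dist_commute)
      also have "\<dots> \<le> 1/2 * dist x (xs N) + a * (qq * nx)" using contr[OF xX xsX] n1 by linarith
      also have "\<dots> \<le> 1/2 * r + a * (qq * nx)" using xX by (simp add: X_def dist_commute)
      also have "\<dots> = r" by (simp add: r_def)
      finally show "z \<in> X" by (simp add: X_def)
    qed
    have complX: "complete X" by (simp add: X_def complete_eq_closed)
    obtain xt0 where xt0X: "xt0 \<in> X" and fixp: "Tm xt0 = xt0"
      using Banach_fix[OF complX _ _ _ selfm contr] xsX by auto
    have Fxt: "F xt0 = qq *\<^sub>R xi"
    proof -
      have "Ai *v (F xt0 - qq *\<^sub>R xi) = 0" using fixp by (simp add: Tm_def)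
      then have "A *v (Ai *v (F xt0 - qq *\<^sub>R xi)) = 0" by simp
      then show ?thesis by (simp add: AAi_v)
    qed
    define d where "d = xt0 - xs N"
    have dr: "norm d \<le> r" using xt0X by (simp add: X_def d_def dist_norm norm_minus_commute)
    have xtU: "xt0 \<in> U" using xt0X XU by auto
    have xtOm: "xt0 \<in> Om" using xtU UOm by auto
    have sumb: "norm (xs N - xstar) + norm (z - xstar) + \<bar>e\<bar> \<le> c1 * qq" if "z \<in> X" for z
    proof -
      have "norm (xs N - xstar) + norm (z - xstar) + \<bar>e\<bar> \<le> 2 * norm d0 + r + \<bar>e\<bar>"
        using Xb[OF that] by (simp add: d0_def)
      also have "\<dots> \<le> 2 * (2*a*B*\<bar>e\<bar>) + r + \<bar>e\<bar>" using d0b by linarith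
      also have "\<dots> = (4*a*B + 1) * \<bar>e\<bar> + 2*a*nx*qq" by (simp add: r_def algebra_simps)
      also have "\<dots> \<le> (4*a*B + 1) * qq + 2*a*nx*qq" using eqq a1 B0 by (intro add_right_mono mult_left_mono) auto
      also have "\<dots> = c1 * qq" by (simp add: c1_def algebra_simps)
      finally show ?thesis .
    qed
    have Ad: "norm (A *v d - qq *\<^sub>R xi) \<le> K0*B*c1*qq*r"
    proof -
      have "norm (A *v d - qq *\<^sub>R xi) = norm (F xt0 - F (xs N) - A *v (xt0 - xs N))"
        using Fxt Fxs by (simp add: d_def norm_minus_commute)
      also have "\<dots> \<le> K0*B*(norm (xs N - xstar) + norm (xt0 - xstar) + \<bar>e\<bar>) * norm (xt0 - xs N)"
        using T1[OF xsU xtU, of e] by (simp add: F_def)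
      also have "\<dots> \<le> K0*B*(c1*qq) * r"
        using sumb[OF xt0X] dr K0 B0 c1 qq0 by (intro mult_mono mult_left_mono) (auto simp: d_def)
      finally show ?thesis by (simp add: mult_ac)
    qed
    define \<rho> where "\<rho> = d - qq *\<^sub>R w"
    have \<rho>eq: "\<rho> = Ai *v (A *v d - qq *\<^sub>R xi)"
      by (simp add: \<rho>_def w_def AiA_v matrix_vector_mult_diff_distrib matrix_vector_mult_scaleR)
    have \<rho>b: "norm \<rho> \<le> C1 * qq\<^sup>2"
    proof -
      have "norm \<rho> \<le> a * (K0*B*c1*qq*r)" unfolding \<rho>eq using Aib Ad a1 by (meson mult_left_mono order_trans less_le_trans zero_less_one less_imp_le)
      also have "\<dots> = C1 * qq\<^sup>2" by (simp add: C1_def r_def power2_eq_square algebra_simps)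
      finally show ?thesis .
    qed
    have part1: "norm (xt0 - xs N - (1 / sqrt (h N)) *\<^sub>R (Ai *v xi)) \<le> C1 * (1 / h N)"
      using \<rho>b qq2 by (simp add: \<rho>_def d_def w_def qqdef H_def)
    define \<gamma> where "\<gamma> = (\<lambda>t::real. xs N + t *\<^sub>R d)"
    have \<gamma>X: "\<gamma> t \<in> X" if "t \<in> {0..1}" for t
    proof -
      have "norm (t *\<^sub>R d) \<le> norm d" using that by (simp add: mult_left_le_one_le)
      then show ?thesis using dr by (simp add: X_def \<gamma>_def dist_norm)
    qed
    have \<gamma>Om: "\<gamma> t \<in> Om" if "t \<in> {0..1}" for t using \<gamma>X[OF that] XU UOm by auto
    have img: "\<gamma> ` {0..1} \<subseteq> Om" using \<gamma>Om by auto
    define cc where "cc = d \<bullet> (A *v d)"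
    define g where "g = (\<lambda>t. S (\<gamma> t) N - 1/2 * H * t\<^sup>2 * cc)"
    define g' where "g' = (\<lambda>t. H * ((F (\<gamma> t) - F (xs N) - A *v (t *\<^sub>R d)) \<bullet> d))"
    have dgt: "(g has_derivative (\<lambda>u. u * g' t)) (at t within {0..1})" if t01: "t \<in> {0..1}" for t
    proof -
      have d\<gamma>: "(\<gamma> has_derivative (\<lambda>u. u *\<^sub>R d)) (at t within {0..1})"
        unfolding \<gamma>_def by (auto intro!: derivative_eq_intros)
      have dS: "((\<lambda>y. S y N) has_derivative (\<lambda>v. gradS (\<gamma> t) N \<bullet> v)) (at (\<gamma> t) within Om)"
        using SDN \<gamma>Om[OF t01] unfolding SD_def by blast
      have "(((\<lambda>y. S y N) \<circ> \<gamma>) has_derivative ((\<lambda>v. gradS (\<gamma> t) N \<bullet> v) \<circ> (\<lambda>u. u *\<^sub>R d))) (at t within {0..1})"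
        by (rule diff_chain_within[OF d\<gamma> has_derivative_subset[OF dS img]])
      then have d1: "((\<lambda>t. S (\<gamma> t) N) has_derivative (\<lambda>u. u * (H * (F (\<gamma> t) \<bullet> d)))) (at t within {0..1})"
        using gradF[OF \<gamma>Om[OF t01]] by (simp add: o_def mult.left_commute)
      have d2: "((\<lambda>t. 1/2 * H * t\<^sup>2 * cc) has_derivative (\<lambda>u. u * (H * t * cc))) (at t within {0..1})"
        by (auto intro!: derivative_eq_intros simp: power2_eq_square algebra_simps)
      have "(g has_derivative (\<lambda>u. u * (H * (F (\<gamma> t) \<bullet> d)) - u * (H * t * cc))) (at t within {0..1})"
        unfolding g_def by (rule has_derivative_diff[OF d1 d2])
      moreover have "(\<lambda>u. u * (H * (F (\<gamma> t) \<bullet> d)) - u * (H * t * cc)) = (\<lambda>u. u * g' t)"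
      proof
        fix u
        have ccc: "(A *v d) \<bullet> d = cc" by (simp add: cc_def inner_commute)
        have "(A *v (t *\<^sub>R d)) \<bullet> d = t * cc"
          by (simp add: ccc matrix_vector_mult_scaleR)
        then show "u * (H * (F (\<gamma> t) \<bullet> d)) - u * (H * t * cc) = u * g' t"
          by (simp add: g'_def Fxs inner_diff_left algebra_simps ccc)
      qed
      ultimately show ?thesis by simp
    qed
    have g'b: "\<bar>g' t\<bar> \<le> c2 * qq" if t01: "t \<in> {0..1}" for t
    proof -
      have \<gamma>U: "\<gamma> t \<in> U" using \<gamma>X[OF t01] XU by auto
      have "\<bar>g' t\<bar> = H * \<bar>(F (\<gamma> t) - F (xs N) - A *v (t *\<^sub>R d)) \<bullet> d\<bar>" using Hpos by (simp add: g'_def abs_mult)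
      also have "\<dots> \<le> H * (norm (F (\<gamma> t) - F (xs N) - A *v (t *\<^sub>R d)) * norm d)"
        using Hpos by (intro mult_left_mono Cauchy_Schwarz_ineq2) auto
      also have "\<dots> \<le> H * ((K0*B*(c1*qq) * r) * r)"
      proof -
        have "norm (F (\<gamma> t) - F (xs N) - A *v (t *\<^sub>R d)) \<le> K0*B*(norm (xs N - xstar) + norm (\<gamma> t - xstar) + \<bar>e\<bar>) * norm (\<gamma> t - xs N)"
          using T1[OF xsU \<gamma>U, of e] by (simp add: F_def \<gamma>_def)
        also have "\<dots> \<le> K0*B*(c1*qq) * r"
        proof -
          have "norm (\<gamma> t - xs N) \<le> r" using \<gamma>X[OF t01] by (simp add: X_def dist_norm norm_minus_commute)
          then show ?thesis using sumb[OF \<gamma>X[OF t01]] K0 B0 c1 qq0 by (intro mult_mono mult_left_mono) auto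
        qed
        finally show ?thesis using dr Hpos K0 B0 c1 qq0 r0
          by (intro mult_left_mono mult_mono) auto
      qed
      also have "\<dots> = c2 * qq * (H * qq\<^sup>2)" by (simp add: c2_def r_def power2_eq_square algebra_simps)
      also have "\<dots> = c2 * qq" using Hq2 by simp
      finally show ?thesis .
    qed
    have gb: "\<bar>g 1 - g 0\<bar> \<le> c2 * qq"
    proof -
      have "norm (g 1 - g 0) \<le> (c2 * qq) * norm (1 - (0::real))"
      proof (rule differentiable_bound[of "{0..1}" g "\<lambda>t u. u * g' t"])
        show "convex {0..1::real}" by simp
        show "(g has_derivative (\<lambda>u. u * g' x)) (at x within {0..1})" if "x \<in> {0..1}" for x using dgt[OF that] .
        show "onorm (\<lambda>u. u * g' x) \<le> c2 * qq" if "x \<in> {0..1}" for x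
          by (rule onorm_le) (use g'b[OF that] in \<open>simp add: abs_mult mult.commute mult_left_mono\<close>)
      qed auto
      then show ?thesis by simp
    qed
    have g1: "g 1 = S xt0 N - 1/2 * H * cc" by (simp add: g_def \<gamma>_def d_def)
    have g0: "g 0 = S (xs N) N" by (simp add: g_def \<gamma>_def)
    have R1: "\<bar>S xt0 N - S (xs N) N - 1/2 * H * cc\<bar> \<le> c2 * qq" using gb g1 g0 by simp
    have dsplit: "d = qq *\<^sub>R w + \<rho>" by (simp add: \<rho>_def)
    have ident: "1/2 * H * (d \<bullet> (A *v d)) - (H * qq) * (d0 \<bullet> xi) - (H * qq) * (d \<bullet> xi) + 1/2 * (xi \<bullet> w)
       = - (H * qq) * (d0 \<bullet> xi) + 1/2 * (H * qq) * (w \<bullet> (A *v \<rho>)) - 1/2 * (H * qq) * (\<rho> \<bullet> xi) + 1/2 * H * (\<rho> \<bullet> (A *v \<rho>))"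
      by (rule value_identity[OF Aw dsplit Hq2])
    have xe: "(xstar - xt0) \<bullet> xi = - (d0 \<bullet> xi) - (d \<bullet> xi)"
    proof -
      have "xstar - xt0 = - d0 - d" by (simp add: d0_def d_def)
      then show ?thesis by (simp add: inner_diff_left)
    qed
    have ts: "tildeS S h xstar xi xt0 N = S xt0 N + (H * qq) * (- (d0 \<bullet> xi) - (d \<bullet> xi))"
      unfolding tildeS_def H_def[symmetric] Hq xe ..
    have sHe: "sqrt H * \<bar>e\<bar> \<ge> 0" using sHpos by simp
    have b1: "\<bar>(H * qq) * (d0 \<bullet> xi)\<bar> \<le> 2*a*B*nx * (sqrt H * \<bar>e\<bar>)"
    proof -
      have "\<bar>d0 \<bullet> xi\<bar> \<le> norm d0 * nx" unfolding nx_def by (rule Cauchy_Schwarz_ineq2)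
      also have "\<dots> \<le> (2*a*B*\<bar>e\<bar>) * nx" using d0b nx0 by (rule mult_right_mono)
      finally have "\<bar>d0 \<bullet> xi\<bar> \<le> 2*a*B*\<bar>e\<bar> * nx" .
      then have "sqrt H * \<bar>d0 \<bullet> xi\<bar> \<le> sqrt H * (2*a*B*\<bar>e\<bar> * nx)" using sHpos by (intro mult_left_mono) auto
      then show ?thesis using sHpos by (simp add: Hq abs_mult algebra_simps)
    qed
    have nAr: "norm (A *v \<rho>) \<le> K0*B*(C1 * qq\<^sup>2)"
      using Ab[of \<rho>] \<rho>b K0 B0 by (meson mult_left_mono order_trans mult_nonneg_nonneg zero_le_one order.trans)
    have sq2: "sqrt H * qq\<^sup>2 = qq" using sq by (simp add: power2_eq_square mult.assoc[symmetric])
    have b2: "\<bar>1/2 * (H * qq) * (w \<bullet> (A *v \<rho>))\<bar> \<le> 1/2 * a * nx * K0 * B * C1 * qq"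
    proof -
      have "\<bar>w \<bullet> (A *v \<rho>)\<bar> \<le> norm w * norm (A *v \<rho>)" by (rule Cauchy_Schwarz_ineq2)
      also have "\<dots> \<le> (a * nx) * (K0*B*(C1 * qq\<^sup>2))" using nw nAr p1(1) by (intro mult_mono) auto
      finally have i: "\<bar>w \<bullet> (A *v \<rho>)\<bar> \<le> (a * nx) * (K0*B*(C1 * qq\<^sup>2))" .
      have "\<bar>1/2 * (H * qq) * (w \<bullet> (A *v \<rho>))\<bar> = 1/2 * sqrt H * \<bar>w \<bullet> (A *v \<rho>)\<bar>" using sHpos by (simp add: Hq abs_mult)
      also have "\<dots> \<le> 1/2 * sqrt H * ((a * nx) * (K0*B*(C1 * qq\<^sup>2)))" using i sHpos by (intro mult_left_mono) auto
      also have "\<dots> = 1/2 * a * nx * K0 * B * C1 * (sqrt H * qq\<^sup>2)" by (simp add: algebra_simps)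
      finally show ?thesis using sq2 by simp
    qed
    have b3: "\<bar>1/2 * (H * qq) * (\<rho> \<bullet> xi)\<bar> \<le> 1/2 * C1 * nx * qq"
    proof -
      have "\<bar>\<rho> \<bullet> xi\<bar> \<le> norm \<rho> * nx" unfolding nx_def by (rule Cauchy_Schwarz_ineq2)
      also have "\<dots> \<le> (C1 * qq\<^sup>2) * nx" using \<rho>b nx0 by (rule mult_right_mono)
      finally have i: "\<bar>\<rho> \<bullet> xi\<bar> \<le> (C1 * qq\<^sup>2) * nx" .
      have "\<bar>1/2 * (H * qq) * (\<rho> \<bullet> xi)\<bar> = 1/2 * sqrt H * \<bar>\<rho> \<bullet> xi\<bar>" using sHpos by (simp add: Hq abs_mult)
      also have "\<dots> \<le> 1/2 * sqrt H * ((C1 * qq\<^sup>2) * nx)" using i sHpos by (intro mult_left_mono) auto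
      also have "\<dots> = 1/2 * C1 * nx * (sqrt H * qq\<^sup>2)" by (simp add: algebra_simps)
      finally show ?thesis using sq2 by simp
    qed
    have b4: "\<bar>1/2 * H * (\<rho> \<bullet> (A *v \<rho>))\<bar> \<le> 1/2 * C1\<^sup>2 * K0 * B * qq"
    proof -
      have "\<bar>\<rho> \<bullet> (A *v \<rho>)\<bar> \<le> norm \<rho> * norm (A *v \<rho>)" by (rule Cauchy_Schwarz_ineq2)
      also have "\<dots> \<le> (C1 * qq\<^sup>2) * (K0*B*(C1 * qq\<^sup>2))" using \<rho>b nAr C1 by (intro mult_mono) auto
      finally have i: "\<bar>\<rho> \<bullet> (A *v \<rho>)\<bar> \<le> (C1 * qq\<^sup>2) * (K0*B*(C1 * qq\<^sup>2))" .
      have "\<bar>1/2 * H * (\<rho> \<bullet> (A *v \<rho>))\<bar> = 1/2 * H * \<bar>\<rho> \<bullet> (A *v \<rho>)\<bar>" using Hpos by (simp add: abs_mult)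
      also have "\<dots> \<le> 1/2 * H * ((C1 * qq\<^sup>2) * (K0*B*(C1 * qq\<^sup>2)))" using i Hpos by (intro mult_left_mono) auto
      also have "\<dots> = 1/2 * C1\<^sup>2 * K0 * B * qq\<^sup>2 * (H * qq\<^sup>2)" by (simp add: algebra_simps power2_eq_square)
      also have "\<dots> = 1/2 * C1\<^sup>2 * K0 * B * qq\<^sup>2" using Hq2 by simp
      also have "\<dots> \<le> 1/2 * C1\<^sup>2 * K0 * B * qq"
      proof -
        have "qq\<^sup>2 \<le> qq" using qq1 qq0 by (simp add: power2_eq_square mult_left_le_one_le)
        then show ?thesis using C1 K0 B0 by (intro mult_left_mono) auto
      qed
      finally show ?thesis .
    qed
    have part2: "\<bar>tildeS S h xstar xi xt0 N - (S (xs N) N - 1/2 * (xi \<bullet> (Ai *v xi)))\<bar> \<le> C2 * (q N + sqrt (h N) * \<bar>eps N\<bar>)"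
    proof -
      have V: "tildeS S h xstar xi xt0 N - (S (xs N) N - 1/2 * (xi \<bullet> (Ai *v xi)))
         = (S xt0 N - S (xs N) N - 1/2 * H * cc)
           + (- ((H * qq) * (d0 \<bullet> xi)) + 1/2 * (H * qq) * (w \<bullet> (A *v \<rho>)) - 1/2 * (H * qq) * (\<rho> \<bullet> xi) + 1/2 * H * (\<rho> \<bullet> (A *v \<rho>)))"
        using ts ident unfolding cc_def w_def[symmetric] by (simp add: algebra_simps)
      have "\<bar>tildeS S h xstar xi xt0 N - (S (xs N) N - 1/2 * (xi \<bullet> (Ai *v xi)))\<bar>
          \<le> c2 * qq + 2*a*B*nx * (sqrt H * \<bar>e\<bar>) + 1/2 * a * nx * K0 * B * C1 * qq + 1/2 * C1 * nx * qq + 1/2 * C1\<^sup>2 * K0 * B * qq"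
        unfolding V by (rule abs5[OF R1 b1 b2 b3 b4])
      also have "\<dots> = (c2 + 1/2 * a * nx * K0 * B * C1 + 1/2 * C1 * nx + 1/2 * C1\<^sup>2 * K0 * B) * qq + (2*a*B*nx) * (sqrt H * \<bar>e\<bar>)"
        by (simp add: algebra_simps)
      also have "\<dots> \<le> C2 * qq + C2 * (sqrt H * \<bar>e\<bar>)"
      proof (rule add_mono)
        show "(c2 + 1/2 * a * nx * K0 * B * C1 + 1/2 * C1 * nx + 1/2 * C1\<^sup>2 * K0 * B) * qq \<le> C2 * qq"
          using qq0 a1 nx0 B0 K0 C1 by (intro mult_right_mono) (auto simp: C2_def)
        show "(2*a*B*nx) * (sqrt H * \<bar>e\<bar>) \<le> C2 * (sqrt H * \<bar>e\<bar>)"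
          using sHe a1 nx0 B0 K0 C1 c2 by (intro mult_right_mono) (auto simp: C2_def)
      qed
      finally show ?thesis by (simp add: algebra_simps qq_def H_def e_def)
    qed
    have hess: "hessS x N = H *\<^sub>R (D2s x + e *\<^sub>R Jsigma x)" if xU: "x \<in> U" for x
    proof -
      have xO: "x \<in> Om" using xU UOm by auto
      have int: "x \<in> interior Om" using xU openU UOm interior_maximal by blast
      have d1: "((\<lambda>y. gradS y N) has_derivative (\<lambda>v. hessS x N *v v)) (at x)"
        using SDN xO at_within_interior[OF int] unfolding SD_def by metis
      have d2: "((\<lambda>y. H *\<^sub>R (Ds y + e *\<^sub>R sigma y)) has_derivative (\<lambda>v. H *\<^sub>R (D2s x *v v + e *\<^sub>R (Jsigma x *v v)))) (at x within Om)"
        using s_C2 sigma_C2 xO by (auto intro!: derivative_intros)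
      have d3: "((\<lambda>y. gradS y N) has_derivative (\<lambda>v. H *\<^sub>R (D2s x *v v + e *\<^sub>R (Jsigma x *v v)))) (at x within Om)"
        by (rule has_derivative_transform_within[OF d2 zero_less_one xO]) (simp add: gradF F_def)
      then have d3': "((\<lambda>y. gradS y N) has_derivative (\<lambda>v. H *\<^sub>R (D2s x *v v + e *\<^sub>R (Jsigma x *v v)))) (at x)"
        using at_within_interior[OF int] by simp
      have fe: "(\<lambda>v. hessS x N *v v) = (\<lambda>v. H *\<^sub>R (D2s x *v v + e *\<^sub>R (Jsigma x *v v)))"
        by (rule has_derivative_unique[OF d1 d3'])
      show ?thesis unfolding matrix_eq
      proof
        fix v
        have "hessS x N *v v = H *\<^sub>R (D2s x *v v + e *\<^sub>R (Jsigma x *v v))" using fun_cong[OF fe, of v] by simp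
        then show "hessS x N *v v = (H *\<^sub>R (D2s x + e *\<^sub>R Jsigma x)) *v v"
          by (simp add: scaleR_matrix_vector_assoc[symmetric] matrix_vector_mult_add_rdistrib)
      qed
    qed
    define M where "M = (\<lambda>x. D2s x + e *\<^sub>R Jsigma x)"
    have detH: "det (hessS x N) = H ^ CARD('n) * det (M x)" if "x \<in> U" for x
      using hess[OF that] by (simp add: M_def det_scaleR)
    have Bc1: "B * c1 * qq \<le> 1"
    proof -
      have "qq \<le> 1 / (B*c1 + 1)" using qqm by (simp add: qmax_def)
      then have "(B*c1) * qq \<le> (B*c1) * (1 / (B*c1 + 1))" using p1 by (intro mult_left_mono) auto
      also have "\<dots> \<le> 1" using p1 by (simp add: field_simps)
      finally show ?thesis .
    qed
    have KBc1: "Kd * (B * c1 * qq) \<le> \<bar>Dd\<bar> / 2"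
    proof -
      have "qq \<le> \<bar>Dd\<bar> / (2 * (Kd*B*c1 + 1))" using qqm by (simp add: qmax_def)
      then have "(Kd*B*c1) * qq \<le> (Kd*B*c1) * (\<bar>Dd\<bar> / (2 * (Kd*B*c1 + 1)))" using p1 by (intro mult_left_mono) auto
      also have "\<dots> = (\<bar>Dd\<bar> / 2) * ((Kd*B*c1) / (Kd*B*c1 + 1))" using p1 by (simp add: field_simps)
      also have "\<dots> \<le> (\<bar>Dd\<bar> / 2) * 1" using p1 by (intro mult_left_mono) auto
      finally show ?thesis by (simp add: mult_ac)
    qed
    have Mb: "norm (M x - A) \<le> B * c1 * qq" if xX: "x \<in> X" for x
    proof -
      have xU: "x \<in> U" using xX XU by auto
      have "norm (M x - A) \<le> norm (D2s x - A) + norm (e *\<^sub>R Jsigma x)"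
        unfolding M_def using norm_triangle_ineq[of "D2s x - A" "e *\<^sub>R Jsigma x"] by (simp add: algebra_simps)
      also have "\<dots> \<le> B * norm (x - xstar) + \<bar>e\<bar> * B"
        using lip[OF xU xstarU] bJ[OF xU] by (intro add_mono) (auto simp: A_def mult_left_mono)
      also have "\<dots> = B * (norm (x - xstar) + \<bar>e\<bar>)" by (simp add: algebra_simps)
      also have "\<dots> \<le> B * (c1 * qq)" using sumb[OF xX] B0 norm_ge_zero[of "xs N - xstar"] by (intro mult_left_mono) linarith+
      finally show ?thesis by (simp add: mult_ac)
    qed
    have detb: "\<bar>det (M x) - Dd\<bar> \<le> Kd * (B * c1 * qq)" if xX: "x \<in> X" for x
    proof -
      have n1: "norm (M x) \<le> norm A + 1"
        using Mb[OF xX] Bc1 norm_triangle_ineq[of "M x - A" A] by simp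
      have "\<bar>det (M x) - det A\<bar> \<le> Kd * norm (M x - A)"
        unfolding Kd_def by (rule det_lipschitz) (use n1 in auto)
      also have "\<dots> \<le> Kd * (B * c1 * qq)" using Mb[OF xX] Kd by (intro mult_left_mono) auto
      finally show ?thesis by (simp add: Dd_def)
    qed
    have part3: "\<bar>sqrt (det (hessS (xs N) N)) / sqrt (det (hessS xt0 N)) - 1\<bar> \<le> C3 * q N"
    proof -
      have Hn: "sqrt (H ^ CARD('n)) > 0" using Hpos by simp
      have "sqrt (det (hessS (xs N) N)) / sqrt (det (hessS xt0 N)) = sqrt (det (M (xs N))) / sqrt (det (M xt0))"
        unfolding detH[OF xsU] detH[OF xtU] real_sqrt_mult using Hn Hpos by simp
      moreover have "\<bar>sqrt (det (M (xs N))) / sqrt (det (M xt0)) - 1\<bar> \<le> 4 * (Kd * (B * c1 * qq)) / \<bar>Dd\<bar>"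
        by (rule sqrt_ratio_bound[OF Dd0 detb[OF xsX] detb[OF xt0X] KBc1])
      moreover have "4 * (Kd * (B * c1 * qq)) / \<bar>Dd\<bar> = C3 * q N" by (simp add: C3_def qq_def)
      ultimately show ?thesis by simp
    qed
    have umax: "unique_max_at Om (\<lambda>x. tildeS S h xstar xi x N) xt0"
    proof -
      let ?f = "\<lambda>x. tildeS S h xstar xi x N"
      let ?g = "\<lambda>x. gradS x N - sqrt H *\<^sub>R xi"
      have df: "(?f has_derivative (\<lambda>v. ?g x \<bullet> v)) (at x within Om)" if "x \<in> Om" for x
      proof -
        have dS: "((\<lambda>y. S y N) has_derivative (\<lambda>v. gradS x N \<bullet> v)) (at x within Om)"
          using SDN that unfolding SD_def by blast
        have "(?f has_derivative (\<lambda>v. gradS x N \<bullet> v + sqrt (h N) * ((0 - v) \<bullet> xi))) (at x within Om)"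
          unfolding tildeS_def by (intro derivative_intros dS)
        moreover have "(\<lambda>v. gradS x N \<bullet> v + sqrt (h N) * ((0 - v) \<bullet> xi)) = (\<lambda>v. ?g x \<bullet> v)"
          by (rule ext) (simp add: H_def inner_diff_left inner_diff_right inner_commute)
        ultimately show ?thesis by simp
      qed
      have dg: "(?g has_derivative (\<lambda>v. hessS x N *v v)) (at x within Om)" if "x \<in> Om" for x
      proof -
        have "((\<lambda>y. gradS y N) has_derivative (\<lambda>v. hessS x N *v v)) (at x within Om)"
          using SDN that unfolding SD_def by blast
        then have "(?g has_derivative (\<lambda>v. hessS x N *v v - 0)) (at x within Om)"
          by (intro derivative_intros)
        then show ?thesis by simp
      qed
      have neg: "v \<bullet> (hessS x N *v v) < 0" if "x \<in> Om" "v \<noteq> 0" for x v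
        using SDN that unfolding SD_def by blast
      have g0: "?g xt0 = 0"
        using gradF[OF xtOm] Fxt Hq by (simp add: mult.assoc[symmetric])
      show ?thesis unfolding unique_max_at_def
      proof (intro conjI ballI impI)
        show "xt0 \<in> Om" by (rule xtOm)
        fix y assume "y \<in> Om" "y \<noteq> xt0"
        then have "?f y < ?f xt0 + ?g xt0 \<bullet> (y - xt0)"
          using strict_concave_grad[OF conv df dg neg xtOm] by metis
        then show "?f y < ?f xt0" using g0 by simp
      qed
    qed
    show ?thesis unfolding P_def using umax part1 part2 part3 by blast
  qed

  then have "\<forall>N. \<exists>x. G N \<longrightarrow> P N x" by blast
  then obtain xt where xt: "\<And>N. G N \<Longrightarrow> P N (xt N)" by metis
  have evP: "eventually (\<lambda>N. P N (xt N) \<and> h N \<ge> 1) sequentially"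
    using evG by eventually_elim (use xt G_def in blast)
  have qeq: "q N = norm (1 / sqrt (h N))" if "h N \<ge> 1" for N using that by (simp add: q_def)
  show ?thesis
  proof (intro exI conjI impI)
    show "eventually (\<lambda>N. unique_max_at Om (\<lambda>x. tildeS S h xstar xi x N) (xt N)) sequentially"
      using evP by eventually_elim (simp add: P_def)
    show "(\<lambda>N. norm (xt N - xs N - (1 / sqrt (h N)) *\<^sub>R (matrix_inv (D2s xstar) *v xi))) \<in> O(\<lambda>N. 1 / h N)"
    proof (rule landau_o.bigI[of "C1 + 1"])
      show "C1 + 1 > 0" using C1 by simp
      show "eventually (\<lambda>N. norm (norm (xt N - xs N - (1 / sqrt (h N)) *\<^sub>R (matrix_inv (D2s xstar) *v xi))) \<le> (C1 + 1) * norm (1 / h N)) sequentially"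
        using evP
      proof eventually_elim
        case (elim N)
        then have "norm (xt N - xs N - (1 / sqrt (h N)) *\<^sub>R (Ai *v xi)) \<le> C1 * (1 / h N)" by (simp add: P_def)
        also have "\<dots> \<le> (C1 + 1) * norm (1 / h N)" using elim by (simp add: divide_right_mono)
        finally show ?case by (simp add: Ai_def A_def)
      qed
    qed
    show "(\<lambda>N. tildeS S h xstar xi (xt N) N - (S (xs N) N - 1/2 * (xi \<bullet> (matrix_inv (D2s xstar) *v xi))))
        \<in> O(\<lambda>N. 1 / sqrt (h N))" if eo: "eps \<in> o(\<lambda>N. 1 / h N)"
    proof (rule landau_o.bigI[of "2 * C2 + 1"])
      show "2 * C2 + 1 > 0" using C2 by simp
      have e: "eventually (\<lambda>N. norm (eps N) \<le> 1 * norm (1 / h N)) sequentially"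
        by (rule landau_o.smallD[OF eo]) simp
      show "eventually (\<lambda>N. norm (tildeS S h xstar xi (xt N) N - (S (xs N) N - 1/2 * (xi \<bullet> (matrix_inv (D2s xstar) *v xi))))
          \<le> (2 * C2 + 1) * norm (1 / sqrt (h N))) sequentially"
        using evP e
      proof eventually_elim
        case (elim N)
        have h1: "h N \<ge> 1" using elim by simp
        have "sqrt (h N) * \<bar>eps N\<bar> \<le> sqrt (h N) * (1 / h N)" using elim h1 by (intro mult_left_mono) auto
        also have "\<dots> = q N" using h1 unfolding q_def by (intro sqrt_inv_eq) simp
        finally have se: "sqrt (h N) * \<bar>eps N\<bar> \<le> q N" .
        have q0: "q N \<ge> 0" using h1 by (simp add: q_def)
        have "\<bar>tildeS S h xstar xi (xt N) N - (S (xs N) N - 1/2 * (xi \<bullet> (Ai *v xi)))\<bar> \<le> C2 * (q N + sqrt (h N) * \<bar>eps N\<bar>)"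
          using elim by (simp add: P_def)
        also have "\<dots> \<le> C2 * (2 * q N)" using se C2 by (intro mult_left_mono) auto
        also have "\<dots> \<le> (2 * C2 + 1) * q N" using q0 by (simp add: algebra_simps)
        finally show ?case using qeq[OF h1] by (simp add: Ai_def A_def)
      qed
    qed
    show "(\<lambda>N. tildeS S h xstar xi (xt N) N - (S (xs N) N - 1/2 * (xi \<bullet> (matrix_inv (D2s xstar) *v xi))))
        \<in> O(\<lambda>N. sqrt (h N) * eps N)" if oe: "(\<lambda>N. 1 / h N) \<in> o(eps)"
    proof (rule landau_o.bigI[of "2 * C2 + 1"])
      show "2 * C2 + 1 > 0" using C2 by simp
      have e: "eventually (\<lambda>N. norm (1 / h N) \<le> 1 * norm (eps N)) sequentially"
        by (rule landau_o.smallD[OF oe]) simp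
      show "eventually (\<lambda>N. norm (tildeS S h xstar xi (xt N) N - (S (xs N) N - 1/2 * (xi \<bullet> (matrix_inv (D2s xstar) *v xi))))
          \<le> (2 * C2 + 1) * norm (sqrt (h N) * eps N)) sequentially"
        using evP e
      proof eventually_elim
        case (elim N)
        have h1: "h N \<ge> 1" using elim by simp
        have "q N = sqrt (h N) * (1 / h N)" using h1 unfolding q_def by (intro sqrt_inv_eq[symmetric]) simp
        also have "\<dots> \<le> sqrt (h N) * \<bar>eps N\<bar>" using elim h1 by (intro mult_left_mono) auto
        finally have se: "q N \<le> sqrt (h N) * \<bar>eps N\<bar>" .
        have "\<bar>tildeS S h xstar xi (xt N) N - (S (xs N) N - 1/2 * (xi \<bullet> (Ai *v xi)))\<bar> \<le> C2 * (q N + sqrt (h N) * \<bar>eps N\<bar>)"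
          using elim by (simp add: P_def)
        also have "\<dots> \<le> C2 * (2 * (sqrt (h N) * \<bar>eps N\<bar>))" using se C2 by (intro mult_left_mono) (auto simp: mult.commute)
        also have "\<dots> \<le> (2 * C2 + 1) * (sqrt (h N) * \<bar>eps N\<bar>)" using h1 by (simp add: algebra_simps)
        finally show ?case using h1 by (simp add: Ai_def A_def abs_mult)
      qed
    qed
    show "(\<lambda>N. sqrt (det (hessS (xs N) N)) / sqrt (det (hessS (xt N) N)) - 1) \<in> O(\<lambda>N. 1 / sqrt (h N))"
    proof (rule landau_o.bigI[of "C3 + 1"])
      show "C3 + 1 > 0" using C3 by simp
      show "eventually (\<lambda>N. norm (sqrt (det (hessS (xs N) N)) / sqrt (det (hessS (xt N) N)) - 1) \<le> (C3 + 1) * norm (1 / sqrt (h N))) sequentially"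
        using evP
      proof eventually_elim
        case (elim N)
        have h1: "h N \<ge> 1" using elim by simp
        have q0: "q N \<ge> 0" using h1 by (simp add: q_def)
        have "\<bar>sqrt (det (hessS (xs N) N)) / sqrt (det (hessS (xt N) N)) - 1\<bar> \<le> C3 * q N" using elim by (simp add: P_def)
        also have "\<dots> \<le> (C3 + 1) * q N" using q0 by (simp add: algebra_simps)
        finally show ?case using qeq[OF h1] by simp
      qed
    qed
  qed
qed


end
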